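(* For every fixed integer $r\ge1$, the ordinary generating function $T_r(z)=\sum_{c\ge0}T(r,c)z^c$ is a rational function of $z$.
   Context: A tatami tiling of the $r\times c$ rectangular grid is a tiling by monomers ($1\times1$ tiles) and dimers ($1\times2$ or $2\times1$ tiles) such that no point is a corner of four distinct tiles. $T(r,c)$ denotes the total number of tatami tilings of the $r\times c$ grid (with any number of monomers), with $T(r,0)=1$. *)

theory Defs
  imports "HOL-Computational_Algebra.Computational_Algebra"
begin

definition grid :: "nat \<Rightarrow> nat \<Rightarrow> (nat \<times> nat) set" where
  "grid r c = {0..<r} \<times> {0..<c}"

definition is_tile :: "(nat \<times> nat) set \<Rightarrow> bool" where
  "is_tile t \<longleftrightarrow> (\<exists>i j. t = {(i, j)}) \<or> (\<exists>i j. t = {(i, j), (i, Suc j)})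
                  \<or> (\<exists>i j. t = {(i, j), (Suc i, j)})"

definition tiling :: "nat \<Rightarrow> nat \<Rightarrow> (nat \<times> nat) set set \<Rightarrow> bool" where
  "tiling r c S \<longleftrightarrow> (\<forall>t\<in>S. is_tile t) \<and> \<Union>S = grid r c
     \<and> (\<forall>t\<in>S. \<forall>t'\<in>S. t \<noteq> t' \<longrightarrow> t \<inter> t' = {})"

text \<open>Tatami condition: no lattice point (i,j) is a corner of four distinct tiles, i.e.
  the four cells around it, (i-1,j-1),(i-1,j),(i,j-1),(i,j), never lie in four
  pairwise distinct tiles.  (Only points with i,j > 0 have four surrounding cells.)\<close>
definition tatami :: "nat \<Rightarrow> nat \<Rightarrow> (nat \<times> nat) set set \<Rightarrow> bool" where
  "tatami r c S \<longleftrightarrow> tiling r c S \<and>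
     (\<forall>i j. 0 < i \<and> 0 < j \<longrightarrow>
        \<not> (\<exists>t1\<in>S. \<exists>t2\<in>S. \<exists>t3\<in>S. \<exists>t4\<in>S.
              (i - 1, j - 1) \<in> t1 \<and> (i - 1, j) \<in> t2 \<and> (i, j - 1) \<in> t3 \<and> (i, j) \<in> t4 \<and>
              t1 \<noteq> t2 \<and> t1 \<noteq> t3 \<and> t1 \<noteq> t4 \<and> t2 \<noteq> t3 \<and> t2 \<noteq> t4 \<and> t3 \<noteq> t4))"

definition T :: "nat \<Rightarrow> nat \<Rightarrow> nat" where
  "T r c = card {S. tatami r c S}"

end

theory Submission
  imports Defs
begin



definition ratf :: "rat fps \<Rightarrow> bool" where
  "ratf F \<longleftrightarrow> (\<exists>p q. poly.coeff q 0 \<noteq> 0 \<and> fps_of_poly q * F = fps_of_poly p)"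

lemma ratf_poly: "ratf (fps_of_poly p)"
  unfolding ratf_def by (rule exI[of _ p], rule exI[of _ 1]) simp

lemma ratf_const: "ratf (fps_const a)"
  using ratf_poly[of "[:a:]"] by (simp add: fps_of_poly_const)

lemma ratf_X: "ratf fps_X"
  using ratf_poly[of "[:0,1:]"] by simp

lemma ratf_0: "ratf 0" using ratf_const[of 0] by simp
lemma ratf_1: "ratf 1" using ratf_const[of 1] by simp

lemma ratf_add: assumes "ratf F" "ratf G" shows "ratf (F + G)"
proof -
  obtain p1 q1 where 1: "poly.coeff q1 0 \<noteq> 0" "fps_of_poly q1 * F = fps_of_poly p1"
    using assms(1) unfolding ratf_def by blast
  obtain p2 q2 where 2: "poly.coeff q2 0 \<noteq> 0" "fps_of_poly q2 * G = fps_of_poly p2"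
    using assms(2) unfolding ratf_def by blast
  have "fps_of_poly (q1*q2) * (F + G) = fps_of_poly q2 * (fps_of_poly q1 * F) + fps_of_poly q1 * (fps_of_poly q2 * G)"
    unfolding fps_of_poly_mult by (simp only: distrib_left mult_ac)
  also have "\<dots> = fps_of_poly (q2*p1 + q1*p2)"
    unfolding 1 2 fps_of_poly_mult fps_of_poly_add ..
  finally have "fps_of_poly (q1*q2) * (F + G) = fps_of_poly (q2*p1 + q1*p2)" .
  moreover have "poly.coeff (q1*q2) 0 \<noteq> 0" using 1 2 by (simp add: coeff_mult_0)
  ultimately show ?thesis unfolding ratf_def by blast
qed

lemma ratf_mult: assumes "ratf F" "ratf G" shows "ratf (F * G)"
proof -
  obtain p1 q1 where 1: "poly.coeff q1 0 \<noteq> 0" "fps_of_poly q1 * F = fps_of_poly p1"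
    using assms(1) unfolding ratf_def by blast
  obtain p2 q2 where 2: "poly.coeff q2 0 \<noteq> 0" "fps_of_poly q2 * G = fps_of_poly p2"
    using assms(2) unfolding ratf_def by blast
  have "fps_of_poly (q1*q2) * (F * G) = (fps_of_poly q1 * F) * (fps_of_poly q2 * G)"
    unfolding fps_of_poly_mult by (simp only: mult_ac)
  also have "\<dots> = fps_of_poly (p1*p2)" unfolding 1 2 fps_of_poly_mult ..
  finally have "fps_of_poly (q1*q2) * (F * G) = fps_of_poly (p1*p2)" .
  moreover have "poly.coeff (q1*q2) 0 \<noteq> 0" using 1 2 by (simp add: coeff_mult_0)
  ultimately show ?thesis unfolding ratf_def by blast
qed

lemma ratf_sum: "finite S \<Longrightarrow> (\<And>s. s \<in> S \<Longrightarrow> ratf (f s)) \<Longrightarrow> ratf (\<Sum>s\<in>S. f s)"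
  by (induction S rule: finite_induct) (auto intro: ratf_add ratf_0)

lemma ratf_fix:
  assumes "ratf A" "ratf B" "B $ 0 = 0" "F = A + B * F"
  shows "ratf F"
proof -
  obtain p1 q1 where 1: "poly.coeff q1 0 \<noteq> 0" "fps_of_poly q1 * A = fps_of_poly p1"
    using assms(1) unfolding ratf_def by blast
  obtain p2 q2 where 2: "poly.coeff q2 0 \<noteq> 0" "fps_of_poly q2 * B = fps_of_poly p2"
    using assms(2) unfolding ratf_def by blast
  have c: "poly.coeff p2 0 = 0"
  proof -
    have "fps_of_poly p2 $ 0 = 0" using 2(2)[symmetric] assms(3) by simp
    thus ?thesis by simp
  qed
  have AF: "A = F - B * F" using assms(4) by (metis add_diff_cancel)
  have "fps_of_poly (q1 * (q2 - p2)) * F = fps_of_poly q2 * (fps_of_poly q1 * (F - B * F))"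
    unfolding fps_of_poly_mult fps_of_poly_diff 2(2)[symmetric]
    by (simp only: right_diff_distrib left_diff_distrib mult_ac)
  also have "\<dots> = fps_of_poly (q2 * p1)" unfolding AF[symmetric] 1 fps_of_poly_mult ..
  finally have "fps_of_poly (q1 * (q2 - p2)) * F = fps_of_poly (q2 * p1)" .
  moreover have "poly.coeff (q1 * (q2 - p2)) 0 \<noteq> 0" using 1 2 c by (simp add: coeff_mult_0)
  ultimately show ?thesis unfolding ratf_def by blast
qed
lemma ratf_system:
  assumes "finite S"
  shows "(\<forall>s\<in>S. ratf (A s)) \<Longrightarrow> (\<forall>s\<in>S. \<forall>t\<in>S. ratf (B s t) \<and> B s t $ 0 = 0)
    \<Longrightarrow> (\<forall>s\<in>S. F s = A s + (\<Sum>t\<in>S. B s t * F t)) \<Longrightarrow> \<forall>s\<in>S. ratf (F s)"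
  using assms
proof (induction S arbitrary: A B rule: finite_induct)
  case empty
  then show ?case by simp
next
  case (insert x S)
  define D where "D = inverse (1 - B x x)"
  have Bxx: "ratf (B x x)" "B x x $ 0 = 0" using insert.prems(2) by auto
  have D1: "D * (1 - B x x) = 1" unfolding D_def using Bxx by (intro inverse_mult_eq_1) simp
  have rD: "ratf D"
  proof (rule ratf_fix[OF ratf_1 Bxx])
    have "D - D * B x x = 1" using D1 by (simp add: right_diff_distrib)
    thus "D = 1 + B x x * D" by (metis diff_add_cancel mult.commute)
  qed
  have Fx0: "F x = A x + B x x * F x + (\<Sum>t\<in>S. B x t * F t)"
  proof -
    have "F x = A x + (\<Sum>t\<in>insert x S. B x t * F t)" using insert.prems(3) by blast
    thus ?thesis using insert.hyps by (simp add: add.assoc)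
  qed
  have Fx: "F x = D * A x + (\<Sum>t\<in>S. (D * B x t) * F t)"
  proof -
    have "(1 - B x x) * F x = A x + (\<Sum>t\<in>S. B x t * F t)" using Fx0 by (simp add: algebra_simps)
    hence "D * ((1 - B x x) * F x) = D * (A x + (\<Sum>t\<in>S. B x t * F t))" by simp
    hence "F x = D * (A x + (\<Sum>t\<in>S. B x t * F t))" using D1 by (simp add: mult.assoc[symmetric])
    thus ?thesis by (simp add: distrib_left sum_distrib_left mult.assoc)
  qed
  define A' where "A' s = A s + B s x * D * A x" for s
  define B' where "B' s t = B s t + B s x * D * B x t" for s t
  have IH: "\<forall>s\<in>S. ratf (F s)"
  proof (rule insert.IH)
    show "\<forall>s\<in>S. ratf (A' s)" unfolding A'_def using insert.prems(1,2) rD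
      by (auto intro!: ratf_add ratf_mult)
    show "\<forall>s\<in>S. \<forall>t\<in>S. ratf (B' s t) \<and> B' s t $ 0 = 0" unfolding B'_def using insert.prems(1,2) rD
      by (auto intro!: ratf_add ratf_mult)
    show "\<forall>s\<in>S. F s = A' s + (\<Sum>t\<in>S. B' s t * F t)"
    proof
      fix s assume s: "s \<in> S"
      have e1: "F s = A s + (\<Sum>t\<in>insert x S. B s t * F t)" using insert.prems(3) s by blast
      have e2: "F s = A s + B s x * F x + (\<Sum>t\<in>S. B s t * F t)"
        using insert.hyps by (subst e1) (simp add: add.assoc)
      have e3: "B s x * F x = B s x * D * A x + (\<Sum>t\<in>S. B s x * D * B x t * F t)"
        by (subst Fx) (simp add: distrib_left sum_distrib_left mult.assoc)
      have e4: "(\<Sum>t\<in>S. B' s t * F t) = (\<Sum>t\<in>S. B s t * F t) + (\<Sum>t\<in>S. B s x * D * B x t * F t)"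
        unfolding B'_def by (simp add: distrib_right sum.distrib)
      have "F s = A' s + (\<Sum>t\<in>S. B' s t * F t)"
        unfolding e4 A'_def using e2 e3 by (simp add: add_ac)
      thus "F s = A' s + (\<Sum>t\<in>S. B' s t * F t)" .
    qed
  qed
  have "ratf (F x)" unfolding Fx using IH insert.prems(1,2) rD insert.hyps
    by (auto intro!: ratf_add ratf_mult ratf_sum)
  with IH show ?case by simp
qed




definition Wd :: "'a set \<Rightarrow> ('a \<Rightarrow> 'a \<Rightarrow> bool) \<Rightarrow> ('a \<Rightarrow> bool) \<Rightarrow> 'a \<Rightarrow> nat \<Rightarrow> (nat \<Rightarrow> 'a) set" where
  "Wd L R Fn d c = {w. (\<forall>j<c. w j \<in> L) \<and> (\<forall>j\<ge>c. w j = d) \<and>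
      (\<forall>j. Suc j < c \<longrightarrow> R (w j) (w (Suc j))) \<and> (\<forall>m. c = Suc m \<longrightarrow> Fn (w m))}"

lemma Wd_finite: assumes "finite L" shows "finite (Wd L R Fn d c)"
proof (rule finite_subset)
  show "Wd L R Fn d c \<subseteq> {f. \<forall>x. (x \<in> {..<c} \<longrightarrow> f x \<in> L) \<and> (x \<notin> {..<c} \<longrightarrow> f x = d)}"
    unfolding Wd_def by auto
  show "finite \<dots>" by (rule finite_set_of_finite_funs) (use assms in auto)
qed

lemma Wd_finite_filter: "finite L \<Longrightarrow> finite {w \<in> Wd L R Fn d c. P w}"
  using Wd_finite[of L R Fn d c] by simp

lemma Wd0: "Wd L R Fn d 0 = {\<lambda>_. d}"
  unfolding Wd_def by auto

definition gcount where "gcount L R Fn d a n = card {w \<in> Wd L R Fn d (Suc n). w 0 = a}"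

lemma g0: assumes "a \<in> L"
  shows "gcount L R Fn d a 0 = (if Fn a then 1 else 0)"
proof -
  have "{w \<in> Wd L R Fn d (Suc 0). w 0 = a} = (if Fn a then {\<lambda>j. if j = 0 then a else d} else {})"
    using assms unfolding Wd_def by (auto simp: fun_eq_iff)
  thus ?thesis unfolding gcount_def by simp
qed

lemma inj_case_nat: "inj (case_nat a)"
proof (rule injI)
  fix f g :: "nat \<Rightarrow> 'a" assume "case_nat a f = case_nat a g"
  hence "\<And>j. case_nat a f (Suc j) = case_nat a g (Suc j)" by simp
  thus "f = g" by (simp add: fun_eq_iff)
qed

lemma gstep_set: assumes "a \<in> L"
  shows "{w \<in> Wd L R Fn d (Suc (Suc n)). w 0 = a} =
    case_nat a ` (\<Union>b\<in>{b\<in>L. R a b}. {w \<in> Wd L R Fn d (Suc n). w 0 = b})"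
proof (rule set_eqI, rule iffI)
  fix w assume w: "w \<in> {w \<in> Wd L R Fn d (Suc (Suc n)). w 0 = a}"
  have eq: "w = case_nat a (\<lambda>j. w (Suc j))"
    using w by (auto simp: fun_eq_iff split: nat.split)
  have "(\<lambda>j. w (Suc j)) \<in> {v \<in> Wd L R Fn d (Suc n). v 0 = w (Suc 0)}"
    using w unfolding Wd_def by auto
  moreover have "w (Suc 0) \<in> {b\<in>L. R a b}" using w unfolding Wd_def by auto
  ultimately show "w \<in> case_nat a ` (\<Union>b\<in>{b\<in>L. R a b}. {w \<in> Wd L R Fn d (Suc n). w 0 = b})"
    by (subst eq) blast
next
  fix w assume "w \<in> case_nat a ` (\<Union>b\<in>{b\<in>L. R a b}. {w \<in> Wd L R Fn d (Suc n). w 0 = b})"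
  then obtain b w' where b: "b \<in> L" "R a b" and w': "w' \<in> Wd L R Fn d (Suc n)" "w' 0 = b"
    and w: "w = case_nat a w'" by blast
  have 1: "\<forall>j<Suc (Suc n). w j \<in> L"
  proof (intro allI impI)
    fix j assume "j < Suc (Suc n)" thus "w j \<in> L" using w' assms unfolding w Wd_def
      by (cases j) auto
  qed
  have 2: "\<forall>j\<ge>Suc (Suc n). w j = d"
  proof (intro allI impI)
    fix j assume "j \<ge> Suc (Suc n)" thus "w j = d" using w' unfolding w Wd_def
      by (cases j) auto
  qed
  have 3: "\<forall>j. Suc j < Suc (Suc n) \<longrightarrow> R (w j) (w (Suc j))"
  proof (intro allI impI)
    fix j assume "Suc j < Suc (Suc n)" thus "R (w j) (w (Suc j))" using w' b unfolding w Wd_def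
      by (cases j) auto
  qed
  have 4: "\<forall>m. Suc (Suc n) = Suc m \<longrightarrow> Fn (w m)" using w' unfolding w Wd_def by auto
  show "w \<in> {w \<in> Wd L R Fn d (Suc (Suc n)). w 0 = a}"
    using 1 2 3 4 unfolding Wd_def w by simp
qed

lemma gstep: assumes "a \<in> L" "finite L"
  shows "gcount L R Fn d a (Suc n) = (\<Sum>b\<in>L. if R a b then gcount L R Fn d b n else 0)"
proof -
  have "gcount L R Fn d a (Suc n) = card (\<Union>b\<in>{b\<in>L. R a b}. {w \<in> Wd L R Fn d (Suc n). w 0 = b})"
    unfolding gcount_def gstep_set[OF assms(1)]
    by (rule card_image) (rule inj_on_subset[OF inj_case_nat subset_UNIV])
  also have "\<dots> = (\<Sum>b\<in>{b\<in>L. R a b}. card {w \<in> Wd L R Fn d (Suc n). w 0 = b})"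
    by (rule card_UN_disjoint) (use assms(2) Wd_finite_filter in auto)
  also have "\<dots> = (\<Sum>b\<in>L. if R a b then gcount L R Fn d b n else 0)"
    unfolding gcount_def by (simp add: sum.inter_filter assms(2))
  finally show ?thesis .
qed

lemma card_Wd_Suc: assumes "finite L"
  shows "card (Wd L R Fn d (Suc n)) = (\<Sum>a\<in>L. gcount L R Fn d a n)"
proof -
  have "Wd L R Fn d (Suc n) = (\<Union>a\<in>L. {w \<in> Wd L R Fn d (Suc n). w 0 = a})"
    unfolding Wd_def by auto
  moreover have "card (\<Union>a\<in>L. {w \<in> Wd L R Fn d (Suc n). w 0 = a}) = (\<Sum>a\<in>L. card {w \<in> Wd L R Fn d (Suc n). w 0 = a})"
    by (rule card_UN_disjoint) (use assms Wd_finite_filter in auto)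
  ultimately have "card (Wd L R Fn d (Suc n)) = (\<Sum>a\<in>L. card {w \<in> Wd L R Fn d (Suc n). w 0 = a})"
    by simp
  thus ?thesis unfolding gcount_def .
qed

lemma ratf_Wd: assumes "finite L"
  shows "ratf (Abs_fps (\<lambda>c. of_nat (card (Wd L R Fn d c))))"
proof -
  define G where "G a = Abs_fps (\<lambda>n. of_nat (gcount L R Fn d a n) :: rat)" for a
  define A where "A a = fps_const (if Fn a then 1 else 0 :: rat)" for a
  define B where "B a b = (if R a b then fps_X else 0 :: rat fps)" for a b
  have B0: "B a b $ 0 = 0" for a b unfolding B_def by simp
  have BG: "(B a b * G b) $ Suc m = (if R a b then of_nat (gcount L R Fn d b m) else 0)" for a b m
    unfolding B_def G_def by simp
  have sys: "\<forall>a\<in>L. G a = A a + (\<Sum>b\<in>L. B a b * G b)"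
  proof
    fix a assume a: "a \<in> L"
    show "G a = A a + (\<Sum>b\<in>L. B a b * G b)"
    proof (rule fps_ext)
      fix n show "G a $ n = (A a + (\<Sum>b\<in>L. B a b * G b)) $ n"
      proof (cases n)
        case 0
        then show ?thesis using a unfolding G_def A_def by (simp add: g0 fps_sum_nth B0)
      next
        case (Suc m)
        have "G a $ n = (\<Sum>b\<in>L. if R a b then of_nat (gcount L R Fn d b m) else 0)"
          using a assms Suc unfolding G_def by (simp add: gstep of_nat_sum if_distrib cong: if_cong)
        then show ?thesis using Suc unfolding A_def by (simp add: fps_sum_nth BG)
      qed
    qed
  qed
  have rG: "\<forall>a\<in>L. ratf (G a)"
    by (rule ratf_system[OF assms _ _ sys]) (auto simp: A_def B_def intro: ratf_const ratf_X ratf_0 ratf_1)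
  have "Abs_fps (\<lambda>c. of_nat (card (Wd L R Fn d c))) = 1 + fps_X * (\<Sum>a\<in>L. G a)"
  proof (rule fps_ext)
    fix n show "Abs_fps (\<lambda>c. of_nat (card (Wd L R Fn d c))) $ n = (1 + fps_X * (\<Sum>a\<in>L. G a)) $ n"
      by (cases n) (simp_all add: Wd0 card_Wd_Suc assms G_def fps_sum_nth of_nat_sum)
  qed
  thus ?thesis using rG assms by (auto intro!: ratf_add ratf_mult ratf_sum ratf_1 ratf_X)
qed




definition hd2 :: "nat \<Rightarrow> nat \<Rightarrow> (nat \<times> nat) set" where "hd2 i j = {(i,j),(i,Suc j)}"
definition vd2 :: "nat \<Rightarrow> nat \<Rightarrow> (nat \<times> nat) set" where "vd2 i j = {(i,j),(Suc i,j)}"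

lemma is_tile_cases:
  assumes "is_tile t"
  obtains i j where "t = {(i,j)}" | i j where "t = hd2 i j" | i j where "t = vd2 i j"
  using assms unfolding is_tile_def hd2_def vd2_def by blast

lemma is_tile_hd2: "is_tile (hd2 i j)" unfolding is_tile_def hd2_def by blast
lemma is_tile_vd2: "is_tile (vd2 i j)" unfolding is_tile_def vd2_def by blast
lemma is_tile_single: "is_tile {x}" unfolding is_tile_def by (cases x) blast

lemma hd2_eq_iff: "hd2 i j = hd2 i' j' \<longleftrightarrow> i = i' \<and> j = j'"
  unfolding hd2_def by (auto simp: doubleton_eq_iff)
lemma vd2_eq_iff: "vd2 i j = vd2 i' j' \<longleftrightarrow> i = i' \<and> j = j'"
  unfolding vd2_def by (auto simp: doubleton_eq_iff)
lemma hd2_ne_vd2: "hd2 i j \<noteq> vd2 i' j'"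
  unfolding hd2_def vd2_def by (auto simp: doubleton_eq_iff)
lemma hd2_ne_single: "hd2 i j \<noteq> {x}"
  unfolding hd2_def by auto
lemma vd2_ne_single: "vd2 i j \<noteq> {x}"
  unfolding vd2_def by auto

lemma tile_hpair: "is_tile t \<Longrightarrow> (i,j) \<in> t \<Longrightarrow> (i,Suc j) \<in> t \<Longrightarrow> t = hd2 i j"
  by (erule is_tile_cases) (auto simp: hd2_def vd2_def)
lemma tile_vpair: "is_tile t \<Longrightarrow> (i,j) \<in> t \<Longrightarrow> (Suc i,j) \<in> t \<Longrightarrow> t = vd2 i j"
  by (erule is_tile_cases) (auto simp: hd2_def vd2_def)
lemma tile_diag1: "is_tile t \<Longrightarrow> (i,j) \<in> t \<Longrightarrow> (Suc i,Suc j) \<in> t \<Longrightarrow> False"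
  by (erule is_tile_cases) (auto simp: hd2_def vd2_def)
lemma tile_diag2: "is_tile t \<Longrightarrow> (i,Suc j) \<in> t \<Longrightarrow> (Suc i,j) \<in> t \<Longrightarrow> False"
  by (erule is_tile_cases) (auto simp: hd2_def vd2_def)

lemma tiling_unique: "tiling r c S \<Longrightarrow> t \<in> S \<Longrightarrow> t' \<in> S \<Longrightarrow> x \<in> t \<Longrightarrow> x \<in> t' \<Longrightarrow> t = t'"
  unfolding tiling_def by blast
lemma tiling_sub: "tiling r c S \<Longrightarrow> t \<in> S \<Longrightarrow> x \<in> t \<Longrightarrow> x \<in> grid r c"
  unfolding tiling_def by blast
lemma tiling_cover: "tiling r c S \<Longrightarrow> x \<in> grid r c \<Longrightarrow> \<exists>t\<in>S. x \<in> t"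
  unfolding tiling_def by blast
lemma tiling_tile: "tiling r c S \<Longrightarrow> t \<in> S \<Longrightarrow> is_tile t"
  unfolding tiling_def by blast

lemma grid_iff[simp]: "(i,j) \<in> grid r c \<longleftrightarrow> i < r \<and> j < c"
  unfolding grid_def by auto

definition Lt :: "nat \<Rightarrow> nat set \<times> nat set \<Rightarrow> bool" where
  "Lt r a \<longleftrightarrow> fst a \<subseteq> {..<r} \<and> (\<forall>i\<in>snd a. Suc i < r) \<and> (\<forall>i. i \<in> snd a \<longrightarrow> Suc i \<notin> snd a)
     \<and> (\<forall>i. i \<in> fst a \<longrightarrow> i \<notin> snd a) \<and> (\<forall>i. Suc i \<in> fst a \<longrightarrow> i \<notin> snd a)"

definition Rp :: "nat \<Rightarrow> nat set \<times> nat set \<Rightarrow> nat set \<times> nat set \<Rightarrow> bool" where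
  "Rp r a b \<longleftrightarrow> (\<forall>i. i \<in> fst a \<longrightarrow> i \<notin> fst b) \<and> (\<forall>i. i \<in> fst a \<longrightarrow> i \<notin> snd b)
     \<and> (\<forall>i. Suc i \<in> fst a \<longrightarrow> i \<notin> snd b)
     \<and> (\<forall>i. Suc i < r \<longrightarrow> i \<in> fst a \<or> Suc i \<in> fst a \<or> i \<in> snd a \<or> i \<in> snd b)"

definition Fn :: "nat set \<times> nat set \<Rightarrow> bool" where "Fn a \<longleftrightarrow> fst a = {}"

abbreviation WW where "WW r c \<equiv> Wd {a. Lt r a} (Rp r) Fn ({},{}) c"

lemma finite_Lt: "finite {a. Lt r a}"
proof (rule finite_subset)
  show "{a. Lt r a} \<subseteq> Pow {..<r} \<times> Pow {..<r}" unfolding Lt_def by (auto; meson Suc_lessD)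
qed simp

definition enc :: "(nat \<times> nat) set set \<Rightarrow> nat \<Rightarrow> nat set \<times> nat set" where
  "enc S = (\<lambda>j. ({i. hd2 i j \<in> S}, {i. vd2 i j \<in> S}))"

definition Dom :: "(nat \<Rightarrow> nat set \<times> nat set) \<Rightarrow> (nat \<times> nat) set set" where
  "Dom w = {hd2 i j | i j. i \<in> fst (w j)} \<union> {vd2 i j | i j. i \<in> snd (w j)}"

definition dec :: "nat \<Rightarrow> nat \<Rightarrow> (nat \<Rightarrow> nat set \<times> nat set) \<Rightarrow> (nat \<times> nat) set set" where
  "dec r c w = Dom w \<union> {{x} | x. x \<in> grid r c \<and> x \<notin> \<Union>(Dom w)}"

lemma partA:
  assumes ta: "tatami r c S"
  shows "enc S \<in> WW r c"
proof -
  have til: "tiling r c S" using ta unfolding tatami_def by blast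
  note U = tiling_unique[OF til] and G = tiling_sub[OF til]
  have A1: "Lt r (enc S j)" if "j < c" for j
    unfolding Lt_def enc_def
  proof (intro conjI allI impI ballI subsetI; simp)
    fix i assume "hd2 i j \<in> S" thus "i < r" using G[of "hd2 i j" "(i,j)"] by (simp add: hd2_def)
  next
    fix i assume "vd2 i j \<in> S" thus "Suc i < r" using G[of "vd2 i j" "(Suc i,j)"] by (simp add: vd2_def)
  next
    fix i assume "vd2 i j \<in> S" thus "vd2 (Suc i) j \<notin> S"
      using U[of "vd2 i j" "vd2 (Suc i) j" "(Suc i, j)"] by (auto simp: vd2_def doubleton_eq_iff)
  next
    fix i assume "hd2 i j \<in> S" thus "vd2 i j \<notin> S"
      using U[of "hd2 i j" "vd2 i j" "(i, j)"] by (auto simp: vd2_def hd2_def doubleton_eq_iff)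
  next
    fix i assume "hd2 (Suc i) j \<in> S" thus "vd2 i j \<notin> S"
      using U[of "hd2 (Suc i) j" "vd2 i j" "(Suc i, j)"] by (auto simp: vd2_def hd2_def doubleton_eq_iff)
  qed
  have A2: "enc S j = ({},{})" if "c \<le> j" for j
    unfolding enc_def using that G[of _ "(_, j)"] by (fastforce simp: hd2_def vd2_def)
  have A3: "Rp r (enc S j) (enc S (Suc j))" if sj: "Suc j < c" for j
    unfolding Rp_def enc_def
  proof (intro conjI allI impI; simp)
    fix i assume "hd2 i j \<in> S" thus "hd2 i (Suc j) \<notin> S"
      using U[of "hd2 i j" "hd2 i (Suc j)" "(i, Suc j)"] by (auto simp: hd2_def doubleton_eq_iff)
  next
    fix i assume "hd2 i j \<in> S" thus "vd2 i (Suc j) \<notin> S"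
      using U[of "hd2 i j" "vd2 i (Suc j)" "(i, Suc j)"] by (auto simp: hd2_def vd2_def doubleton_eq_iff)
  next
    fix i assume "hd2 (Suc i) j \<in> S" thus "vd2 i (Suc j) \<notin> S"
      using U[of "hd2 (Suc i) j" "vd2 i (Suc j)" "(Suc i, Suc j)"] by (auto simp: hd2_def vd2_def doubleton_eq_iff)
  next
    fix i assume i: "Suc i < r"
    show "hd2 i j \<in> S \<or> hd2 (Suc i) j \<in> S \<or> vd2 i j \<in> S \<or> vd2 i (Suc j) \<in> S"
    proof (rule ccontr)
      assume n: "\<not> ?thesis"
      obtain t1 where t1: "t1 \<in> S" "(i,j) \<in> t1" using tiling_cover[OF til, of "(i,j)"] i sj by auto
      obtain t2 where t2: "t2 \<in> S" "(i,Suc j) \<in> t2" using tiling_cover[OF til, of "(i,Suc j)"] i sj by auto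
      obtain t3 where t3: "t3 \<in> S" "(Suc i,j) \<in> t3" using tiling_cover[OF til, of "(Suc i,j)"] i sj by auto
      obtain t4 where t4: "t4 \<in> S" "(Suc i,Suc j) \<in> t4" using tiling_cover[OF til, of "(Suc i,Suc j)"] i sj by auto
      note T = tiling_tile[OF til]
      have "t1 \<noteq> t2" using tile_hpair[OF T[OF t1(1)] t1(2)] t2 t1 n by auto
      moreover have "t1 \<noteq> t3" using tile_vpair[OF T[OF t1(1)] t1(2)] t3 t1 n by auto
      moreover have "t1 \<noteq> t4" using tile_diag1[OF T[OF t1(1)] t1(2)] t4 by auto
      moreover have "t2 \<noteq> t3" using tile_diag2[OF T[OF t2(1)] t2(2)] t3 by auto
      moreover have "t2 \<noteq> t4" using tile_vpair[OF T[OF t2(1)] t2(2)] t4 t2 n by auto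
      moreover have "t3 \<noteq> t4" using tile_hpair[OF T[OF t3(1)] t3(2)] t4 t3 n by auto
      ultimately show False using ta t1 t2 t3 t4 unfolding tatami_def
        by (metis (no_types, lifting) diff_Suc_1 zero_less_Suc)
    qed
  qed
  have A4: "Fn (enc S m)" if "c = Suc m" for m
    unfolding Fn_def enc_def using that G[of _ "(_, Suc m)"] by (auto simp: hd2_def)
  show ?thesis unfolding Wd_def using A1 A2 A3 A4 by auto
qed


context
  fixes r c w assumes w: "w \<in> WW r c"
begin

lemma W_L: "j < c \<Longrightarrow> Lt r (w j)" using w unfolding Wd_def by auto
lemma W_R: "Suc j < c \<Longrightarrow> Rp r (w j) (w (Suc j))" using w unfolding Wd_def by auto
lemma W_d: "c \<le> j \<Longrightarrow> w j = ({},{})" using w unfolding Wd_def by auto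
lemma W_F: "c = Suc m \<Longrightarrow> fst (w m) = {}" using w unfolding Wd_def Fn_def by auto

lemma W1: assumes "i \<in> fst (w j)" shows "i < r" "Suc j < c"
proof -
  have jc: "j < c" using W_d[of j] assms by (cases "c \<le> j") auto
  show "i < r" using W_L[OF jc] assms unfolding Lt_def by auto
  show "Suc j < c"
  proof (rule ccontr)
    assume "\<not> Suc j < c" hence "c = Suc j" using jc by simp
    thus False using W_F[of j] assms by simp
  qed
qed

lemma W2: assumes "i \<in> snd (w j)" shows "Suc i < r" "j < c"
proof -
  show jc: "j < c" using W_d[of j] assms by (cases "c \<le> j") auto
  show "Suc i < r" using W_L[OF jc] assms unfolding Lt_def by auto
qed

lemma W1': "i \<in> fst (w j) \<Longrightarrow> i < r \<and> j < c \<and> Suc j < c"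
  using W1[of i j] by simp
lemma W2': "i \<in> snd (w j) \<Longrightarrow> i < r \<and> Suc i < r \<and> j < c"
  using W2[of i j] by simp

lemma Dom_sub: "t \<in> Dom w \<Longrightarrow> x \<in> t \<Longrightarrow> x \<in> grid r c"
  unfolding Dom_def hd2_def vd2_def
  by (auto dest: W1' W2')

lemma hh: assumes "i \<in> fst (w j)" "i' \<in> fst (w j')" "x \<in> hd2 i j" "x \<in> hd2 i' j'"
  shows "hd2 i j = hd2 i' j'"
proof -
  have "i = i'" "j = j' \<or> j' = Suc j \<or> j = Suc j'" using assms(3,4) unfolding hd2_def by auto
  moreover have "j' \<noteq> Suc j" using W_R[OF W1(2)[OF assms(1)]] assms(1,2) unfolding Rp_def
    by (auto simp: \<open>i = i'\<close>)
  moreover have "j \<noteq> Suc j'" using W_R[OF W1(2)[OF assms(2)]] assms(1,2) unfolding Rp_def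
    by (auto simp: \<open>i = i'\<close>)
  ultimately show ?thesis by auto
qed

lemma vv: assumes "i \<in> snd (w j)" "i' \<in> snd (w j')" "x \<in> vd2 i j" "x \<in> vd2 i' j'"
  shows "vd2 i j = vd2 i' j'"
proof -
  have "j = j'" "i = i' \<or> i' = Suc i \<or> i = Suc i'" using assms(3,4) unfolding vd2_def by auto
  moreover have "i' \<noteq> Suc i" using W_L[OF W2(2)[OF assms(1)]] assms(1,2) unfolding Lt_def
    by (auto simp: \<open>j = j'\<close>)
  moreover have "i \<noteq> Suc i'" using W_L[OF W2(2)[OF assms(2)]] assms(1,2) unfolding Lt_def
    by (auto simp: \<open>j = j'\<close>)
  ultimately show ?thesis by auto
qed

lemma hv: assumes "i \<in> fst (w j)" "i' \<in> snd (w j')" "x \<in> hd2 i j" "x \<in> vd2 i' j'"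
  shows False
proof -
  have L: "Lt r (w j)" using W1(2)[OF assms(1)] W_L by simp
  have R: "Rp r (w j) (w (Suc j))" using W1(2)[OF assms(1)] W_R by simp
  have "(i = i' \<and> j = j') \<or> (i = Suc i' \<and> j = j') \<or> (i = i' \<and> j' = Suc j) \<or> (i = Suc i' \<and> j' = Suc j)"
    using assms(3,4) unfolding hd2_def vd2_def by auto
  thus False
  proof (elim disjE conjE)
    assume "i = i'" "j = j'" thus False using L assms(1,2) unfolding Lt_def by blast
  next
    assume "i = Suc i'" "j = j'" thus False using L assms(1,2) unfolding Lt_def by blast
  next
    assume "i = i'" "j' = Suc j" thus False using R assms(1,2) unfolding Rp_def by blast
  next
    assume "i = Suc i'" "j' = Suc j" thus False using R assms(1,2) unfolding Rp_def by blast
  qed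
qed

lemma Dom_cases:
  assumes "t \<in> Dom w"
  obtains (h) i j where "t = hd2 i j" "i \<in> fst (w j)" | (v) i j where "t = vd2 i j" "i \<in> snd (w j)"
  using assms unfolding Dom_def by blast

lemma Dom_unique: assumes "t \<in> Dom w" "t' \<in> Dom w" "x \<in> t" "x \<in> t'" shows "t = t'"
  using assms(1)
proof (cases rule: Dom_cases)
  case (h i j)
  from assms(2) show ?thesis
  proof (cases rule: Dom_cases)
    case (h i' j') thus ?thesis using hh[of i j i' j' x] \<open>t = hd2 i j\<close> \<open>i \<in> fst (w j)\<close> assms(3,4) by simp
  next
    case (v i' j') thus ?thesis using hv[of i j i' j' x] \<open>t = hd2 i j\<close> \<open>i \<in> fst (w j)\<close> assms(3,4) by simp
  qed
next
  case (v i j)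
  from assms(2) show ?thesis
  proof (cases rule: Dom_cases)
    case (h i' j') thus ?thesis using hv[of i' j' i j x] \<open>t = vd2 i j\<close> \<open>i \<in> snd (w j)\<close> assms(3,4) by simp
  next
    case (v i' j') thus ?thesis using vv[of i j i' j' x] \<open>t = vd2 i j\<close> \<open>i \<in> snd (w j)\<close> assms(3,4) by simp
  qed
qed

lemma dec_unique: assumes "t \<in> dec r c w" "t' \<in> dec r c w" "x \<in> t" "x \<in> t'" shows "t = t'"
proof -
  consider "t \<in> Dom w" | y where "t = {y}" "y \<notin> \<Union>(Dom w)" using assms(1) unfolding dec_def by blast
  moreover consider "t' \<in> Dom w" | y' where "t' = {y'}" "y' \<notin> \<Union>(Dom w)" using assms(2) unfolding dec_def by blast
  ultimately show ?thesis using Dom_unique[of t t' x] assms(3,4) by (cases; cases) blast+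
qed

lemma dec_tiling: "tiling r c (dec r c w)"
  unfolding tiling_def
proof (intro conjI ballI impI)
  fix t assume "t \<in> dec r c w" thus "is_tile t"
    unfolding dec_def Dom_def by (auto intro: is_tile_hd2 is_tile_vd2 is_tile_single)
next
  show "\<Union> (dec r c w) = grid r c"
  proof
    show "\<Union> (dec r c w) \<subseteq> grid r c" using Dom_sub unfolding dec_def by auto
    show "grid r c \<subseteq> \<Union> (dec r c w)"
    proof
      fix x assume x: "x \<in> grid r c"
      show "x \<in> \<Union> (dec r c w)"
      proof (cases "x \<in> \<Union>(Dom w)")
        case True thus ?thesis unfolding dec_def by blast
      next
        case False hence "{x} \<in> dec r c w" using x unfolding dec_def by blast
        thus ?thesis by blast
      qed
    qed
  qed
next
  fix t t' assume "t \<in> dec r c w" "t' \<in> dec r c w" "t \<noteq> t'"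
  thus "t \<inter> t' = {}" using dec_unique by blast
qed

lemma dec_tatami: "tatami r c (dec r c w)"
  unfolding tatami_def
proof (intro conjI dec_tiling allI impI notI)
  fix i j :: nat assume ij: "0 < i \<and> 0 < j"
  then obtain i0 j0 where i0: "i = Suc i0" and j0: "j = Suc j0" by (metis gr0_implies_Suc)
  assume "\<exists>t1\<in>dec r c w. \<exists>t2\<in>dec r c w. \<exists>t3\<in>dec r c w. \<exists>t4\<in>dec r c w.
              (i - 1, j - 1) \<in> t1 \<and> (i - 1, j) \<in> t2 \<and> (i, j - 1) \<in> t3 \<and> (i, j) \<in> t4 \<and>
              t1 \<noteq> t2 \<and> t1 \<noteq> t3 \<and> t1 \<noteq> t4 \<and> t2 \<noteq> t3 \<and> t2 \<noteq> t4 \<and> t3 \<noteq> t4"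
  then obtain t1 t2 t3 t4 where t: "t1 \<in> dec r c w" "t2 \<in> dec r c w" "t3 \<in> dec r c w" "t4 \<in> dec r c w"
    "(i0, j0) \<in> t1" "(i0, Suc j0) \<in> t2" "(Suc i0, j0) \<in> t3" "(Suc i0, Suc j0) \<in> t4"
    "t1 \<noteq> t2" "t1 \<noteq> t3" "t2 \<noteq> t4" "t3 \<noteq> t4" unfolding i0 j0 by auto
  have "(Suc i0, Suc j0) \<in> grid r c" using dec_tiling t(4,8) by (rule tiling_sub)
  hence bd: "Suc i0 < r" "Suc j0 < c" by auto
  have R: "Rp r (w j0) (w (Suc j0))" using W_R bd by simp
  have DD: "Dom w \<subseteq> dec r c w" unfolding dec_def by auto
  have "i0 \<in> fst (w j0) \<or> Suc i0 \<in> fst (w j0) \<or> i0 \<in> snd (w j0) \<or> i0 \<in> snd (w (Suc j0))"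
    using R bd unfolding Rp_def by auto
  thus False
  proof (elim disjE)
    assume h: "i0 \<in> fst (w j0)"
    hence "hd2 i0 j0 \<in> dec r c w" using DD unfolding Dom_def by blast
    hence "t1 = hd2 i0 j0" "t2 = hd2 i0 j0" using dec_unique t unfolding hd2_def by blast+
    thus False using t by simp
  next
    assume h: "Suc i0 \<in> fst (w j0)"
    hence "hd2 (Suc i0) j0 \<in> dec r c w" using DD unfolding Dom_def by blast
    hence "t3 = hd2 (Suc i0) j0" "t4 = hd2 (Suc i0) j0" using dec_unique t unfolding hd2_def by blast+
    thus False using t by simp
  next
    assume h: "i0 \<in> snd (w j0)"
    hence "vd2 i0 j0 \<in> dec r c w" using DD unfolding Dom_def by blast
    hence "t1 = vd2 i0 j0" "t3 = vd2 i0 j0" using dec_unique t unfolding vd2_def by blast+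
    thus False using t by simp
  next
    assume h: "i0 \<in> snd (w (Suc j0))"
    hence "vd2 i0 (Suc j0) \<in> dec r c w" using DD unfolding Dom_def by blast
    hence "t2 = vd2 i0 (Suc j0)" "t4 = vd2 i0 (Suc j0)" using dec_unique t unfolding vd2_def by blast+
    thus False using t by simp
  qed
qed

lemma enc_dec: "enc (dec r c w) = w"
proof
  fix j
  have 1: "hd2 i j \<in> dec r c w \<longleftrightarrow> i \<in> fst (w j)" for i
    unfolding dec_def Dom_def by (auto simp: hd2_eq_iff hd2_ne_vd2 hd2_ne_single)
  have 2: "vd2 i j \<in> dec r c w \<longleftrightarrow> i \<in> snd (w j)" for i
    unfolding dec_def Dom_def by (auto simp: vd2_eq_iff hd2_ne_vd2[symmetric] vd2_ne_single)
  show "enc (dec r c w) j = w j" unfolding enc_def 1 2 by simp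
qed

end

lemma dec_enc: assumes ta: "tatami r c S" shows "dec r c (enc S) = S"
proof -
  have til: "tiling r c S" using ta unfolding tatami_def by blast
  have DS: "Dom (enc S) \<subseteq> S" unfolding Dom_def enc_def by auto
  show ?thesis
  proof
    show "dec r c (enc S) \<subseteq> S"
    proof
      fix t assume "t \<in> dec r c (enc S)"
      then consider "t \<in> Dom (enc S)" | x where "t = {x}" "x \<in> grid r c" "x \<notin> \<Union>(Dom (enc S))"
        unfolding dec_def by blast
      thus "t \<in> S"
      proof cases
        case 1 thus ?thesis using DS by blast
      next
        case 2
        obtain t' where t': "t' \<in> S" "x \<in> t'" using tiling_cover[OF til 2(2)] by blast
        from tiling_tile[OF til t'(1)] show ?thesis
        proof (cases rule: is_tile_cases)
          case 1 thus ?thesis using t' 2 by auto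
        next
          case (2 a b)
          hence "t' \<in> Dom (enc S)" using t' unfolding Dom_def enc_def by auto
          thus ?thesis using t' \<open>x \<notin> \<Union>(Dom (enc S))\<close> by blast
        next
          case (3 a b)
          hence "t' \<in> Dom (enc S)" using t' unfolding Dom_def enc_def by auto
          thus ?thesis using t' \<open>x \<notin> \<Union>(Dom (enc S))\<close> by blast
        qed
      qed
    qed
  next
    show "S \<subseteq> dec r c (enc S)"
    proof
      fix t assume t: "t \<in> S"
      from tiling_tile[OF til t] show "t \<in> dec r c (enc S)"
      proof (cases rule: is_tile_cases)
        case (1 i j)
        have g: "(i,j) \<in> grid r c" using tiling_sub[OF til t] 1 by simp
        have "(i,j) \<notin> \<Union>(Dom (enc S))"
        proof
          assume "(i,j) \<in> \<Union>(Dom (enc S))"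
          then obtain d where d: "d \<in> Dom (enc S)" "(i,j) \<in> d" by blast
          have "d = t" using tiling_unique[OF til _ t d(2)] d DS 1 by blast
          thus False using d(1) 1 unfolding Dom_def by (auto simp: hd2_ne_single[symmetric] vd2_ne_single[symmetric])
        qed
        thus ?thesis using g 1 unfolding dec_def by blast
      next
        case (2 i j) thus ?thesis using t unfolding dec_def Dom_def enc_def by auto
      next
        case (3 i j) thus ?thesis using t unfolding dec_def Dom_def enc_def by auto
      qed
    qed
  qed
qed

lemma T_card: "T r c = card (WW r c)"
proof -
  have "bij_betw enc {S. tatami r c S} (WW r c)"
  proof (rule bij_betw_imageI)
    show "inj_on enc {S. tatami r c S}"
      by (rule inj_onI) (metis dec_enc mem_Collect_eq)
    show "enc ` {S. tatami r c S} = WW r c"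
    proof
      show "enc ` {S. tatami r c S} \<subseteq> WW r c" using partA by blast
      show "WW r c \<subseteq> enc ` {S. tatami r c S}"
      proof
        fix w assume w: "w \<in> WW r c"
        have "w = enc (dec r c w)" using enc_dec[OF w] by simp
        thus "w \<in> enc ` {S. tatami r c S}" using dec_tatami[OF w] by blast
      qed
    qed
  qed
  thus ?thesis unfolding T_def by (rule bij_betw_same_card)
qed

theorem theorem3:
  fixes r :: nat
  assumes "r \<ge> 1"
  shows "\<exists>p q :: rat poly. q \<noteq> 0 \<and>
           fps_of_poly q * Abs_fps (\<lambda>c. of_nat (T r c)) = fps_of_poly p"
proof -
  have "ratf (Abs_fps (\<lambda>c. of_nat (T r c)))"
    unfolding T_card by (rule ratf_Wd[OF finite_Lt])
  then obtain p q :: "rat poly" where "poly.coeff q 0 \<noteq> 0" "fps_of_poly q * Abs_fps (\<lambda>c. of_nat (T r c)) = fps_of_poly p"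
    unfolding ratf_def by blast
  moreover have "q \<noteq> 0" using \<open>poly.coeff q 0 \<noteq> 0\<close> by auto
  ultimately show ?thesis by blast
qed


end
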